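(* Let $n\ge0$. Among the elements of $R$ whose binary representation has length $2n+4$, exactly one has binary representation beginning with $1000$, namely $[1000(10)^n]_2$; moreover $[1000(10)^n]_2$ is the smallest element of $R$ whose binary representation has length $2n+4$.
   Context: Stern's sequence $(a(n))_{n\ge0}$: $a(0)=0$, $a(1)=1$, $a(2n)=a(n)$, $a(2n+1)=a(n)+a(n+1)$; $s(n)=a(n+1)$. $R$ is the set of record-setters of $s$, i.e. indices $v\ge0$ with $s(i)<s(v)$ for all $i<v$. Binary representations have no leading zeros. For a binary string $x$, $[x]_2$ is the integer it represents in base 2; $x^i$ denotes $i$-fold concatenation. *)

theory Defs
  imports Main
begin

function stern :: "nat \<Rightarrow> nat" where
  "stern n = (if n = 0 then 0 else if n = 1 then 1
              else if even n then stern (n div 2)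
              else stern (n div 2) + stern (n div 2 + 1))"
  by auto
termination
  by (relation "measure id") (auto elim!: oddE)

definition s :: "nat \<Rightarrow> nat" where
  "s n = stern (n + 1)"

definition R :: "nat set" where
  "R = {v. \<forall>i<v. s i < s v}"

text \<open>Binary representation, most significant digit first, True = 1, no leading zeros;
  the representation of 0 is the single digit 0.\<close>
fun bin_aux :: "nat \<Rightarrow> bool list" where
  "bin_aux n = (if n = 0 then [] else bin_aux (n div 2) @ [odd n])"

definition bin :: "nat \<Rightarrow> bool list" where
  "bin n = (if n = 0 then [False] else bin_aux n)"

declare bin_aux.simps[simp del]

fun val2 :: "bool list \<Rightarrow> nat" where
  "val2 [] = 0"
| "val2 (b # xs) = (if b then 2 ^ length xs else 0) + val2 xs"

definition pow_str :: "'a list \<Rightarrow> nat \<Rightarrow> 'a list" where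
  "pow_str x i = concat (replicate i x)"

end

theory Submission
  imports Defs
begin

lemma stern_0[simp]: "stern 0 = 0" by simp
lemma stern_1[simp]: "stern (Suc 0) = 1" by simp
lemma stern_even: "stern (2*m) = stern m"
  by (cases "m = 0") (simp_all)
lemma stern_odd: "stern (2*m+1) = stern m + stern (m+1)"
  by (cases "m = 0") (simp_all)

declare stern.simps[simp del]

lemma stern_2[simp]: "stern 2 = 1" using stern_even[of 1] by simp
lemma stern_2'[simp]: "stern (Suc (Suc 0)) = 1" using stern_2 by (simp add: numeral_2_eq_2)
lemma stern_8: "stern 8 = 1" using stern_even[of 4] stern_even[of 2] stern_even[of 1] by simp
lemma stern_9: "stern 9 = 4"
proof -
  have "stern 3 = 2" using stern_odd[of 1] by simp
  have "stern 5 = 3" using stern_odd[of 2] `stern 3 = 2` by simp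
  have "stern 4 = 1" using stern_even[of 2] by simp
  show ?thesis using stern_odd[of 4] `stern 5 = 3` `stern 4 = 1` by simp
qed

fun F :: "nat \<Rightarrow> nat" where
  "F 0 = 0" | "F (Suc 0) = 1" | "F (Suc (Suc n)) = F (Suc n) + F n"

lemma F_mono: "F n \<le> F (Suc n)"
  by (cases n) auto

lemma ident: "x \<le> 2^j \<Longrightarrow> stern (2^j*p + x) = stern p * stern (2^j - x) + stern (p+1) * stern x"
proof (induction j arbitrary: x)
  case 0
  then have "x = 0 \<or> x = 1" by auto
  then show ?case by auto
next
  case (Suc j)
  show ?case
  proof (cases "even x")
    case True
    then obtain y where y: "x = 2*y" by blast
    with Suc.prems have yl: "y \<le> 2^j" by simp
    have e1: "2^(Suc j)*p + x = 2*(2^j*p + y)" using y by simp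
    have e2: "2^(Suc j) - x = 2*(2^j - y)" using y by simp
    have "stern (2^(Suc j)*p + x) = stern (2^j*p + y)" unfolding e1 by (rule stern_even)
    moreover have "stern (2^(Suc j) - x) = stern (2^j - y)" unfolding e2 by (rule stern_even)
    moreover have "stern x = stern y" unfolding y by (rule stern_even)
    ultimately show ?thesis using Suc.IH[OF yl] by simp
  next
    case False
    then obtain y where y: "x = 2*y+1" using oddE by blast
    with Suc.prems have yl: "y+1 \<le> 2^j" by simp
    have e1: "2^(Suc j)*p + x = 2*(2^j*p + y) + 1" using y by simp
    have e2: "2^(Suc j) - x = 2*(2^j - (y+1)) + 1" using y yl by simp
    have e3: "2^j - (y+1) + 1 = 2^j - y" using yl by simp
    note i1 = Suc.IH[of y]
    note i2 = Suc.IH[OF yl]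
    show ?thesis unfolding e1 e2 stern_odd e3 using i1 i2 yl y stern_odd[of y]
      by (simp add: algebra_simps)
  qed
qed

lemma L1: "z \<le> 2^k \<Longrightarrow> stern z \<le> F (k+1)"
proof (induction k arbitrary: z rule: less_induct)
  case (less k)
  show ?case
  proof (cases "k \<le> 1")
    case True
    then have "k = 0 \<or> k = 1" by auto
    then have "z \<le> 2" using less.prems by auto
    then have "z = 0 \<or> z = 1 \<or> z = 2" by auto
    moreover have "F (k+1) = 1" using \<open>k = 0 \<or> k = 1\<close> by auto
    ultimately show ?thesis by auto
  next
    case False
    define k' where "k' = k - 2"
    have k': "k = Suc (Suc k')" using False k'_def by simp
    show ?thesis
    proof (cases "even z")
      case True
      then obtain y where y: "z = 2*y" by blast
      have "y \<le> 2^(Suc k')" using less.prems y k' by simp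
      then have "stern y \<le> F (Suc k' + 1)" using less.IH[of "Suc k'"] k' by simp
      moreover have "F (Suc k' + 1) \<le> F (k+1)" using k' F_mono[of "Suc (Suc k')"] by simp
      ultimately show ?thesis using y stern_even by simp
    next
      case False
      then obtain q where q: "z = 2*q+1" using oddE by blast
      have "z \<noteq> 2^k" using False k' by auto
      then have ql: "q + 1 \<le> 2^(Suc k')" using less.prems q k' by auto
      have A: "\<And>r. r \<le> 2^(Suc k') \<Longrightarrow> stern r \<le> F (Suc (Suc k'))"
        using less.IH[of "Suc k'"] k' by simp
      have B: "\<And>r. r \<le> 2^(Suc k') \<Longrightarrow> even r \<Longrightarrow> stern r \<le> F (Suc k')"
      proof -
        fix r :: nat assume "r \<le> 2^(Suc k')" "even r"
        then obtain e where e: "r = 2*e" by blast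
        with \<open>r \<le> 2^(Suc k')\<close> have "e \<le> 2^k'" by simp
        then have "stern e \<le> F (k'+1)" using less.IH[of k'] k' by simp
        then show "stern r \<le> F (Suc k')" using e stern_even by simp
      qed
      have "stern q + stern (q+1) \<le> F (Suc (Suc k')) + F (Suc k')"
      proof (cases "even q")
        case True
        then show ?thesis using A[OF ql] B[of q] ql by (simp add: add_le_mono add.commute)
      next
        case False
        then show ?thesis using A[of q] B[OF ql] ql by (simp add: add_le_mono)
      qed
      then show ?thesis using q stern_odd k' by simp
    qed
  qed
qed

lemma QB: assumes "D \<le> C" "y \<le> 2^j"
  shows "C * stern (2^j - y) + D * stern y \<le> C * F (j+1) + D * F j"
proof -
  obtain e where e: "C = D + e" using assms(1) le_Suc_ex by blast
  have a1: "stern (2^j - y) \<le> F (j+1)" using L1[of "2^j - y" j] by simp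
  have "stern (2^j*1 + y) = stern (2^j - y) + stern y" using ident[OF assms(2), of 1] by simp
  moreover have "stern (2^j*1 + y) \<le> F (j+2)" using L1[of "2^j*1+y" "j+1"] assms(2) by simp
  ultimately have a2: "stern (2^j - y) + stern y \<le> F (j+1) + F j" by simp
  have "C * stern (2^j - y) + D * stern y = D * (stern (2^j - y) + stern y) + e * stern (2^j - y)"
    using e by (simp add: algebra_simps)
  also have "\<dots> \<le> D * (F (j+1) + F j) + e * F (j+1)"
    using mult_le_mono2[OF a2, of D] mult_le_mono2[OF a1, of e] by (rule add_mono)
  also have "\<dots> = C * F (j+1) + D * F j" using e by (simp add: algebra_simps)
  finally show ?thesis .
qed

fun tt :: "nat \<Rightarrow> nat" where
  "tt 0 = 0" | "tt (Suc n) = 2*4^n + tt n"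

lemma tt_eq: "3 * tt n + 2 = 2 * 4^n"
  by (induction n) auto

lemma tt_less: "tt n < 4^n" using tt_eq[of n] by linarith

fun U :: "nat \<Rightarrow> nat \<Rightarrow> nat \<Rightarrow> nat" where
  "U 0 c d = c" | "U (Suc m) c d = U m (c+d) (c+2*d)"
fun V :: "nat \<Rightarrow> nat \<Rightarrow> nat \<Rightarrow> nat" where
  "V 0 c d = d" | "V (Suc m) c d = V m (c+d) (c+2*d)"

lemma F2: "F (Suc (Suc n)) = F (Suc n) + F n" by simp

lemma V_closed: "V m c d = c * F (2*m) + d * F (2*m+1)"
proof (induction m arbitrary: c d)
  case 0 then show ?case by simp
next
  case (Suc m)
  have a: "2 * Suc m = Suc (Suc (2*m))" by simp
  show ?case unfolding V.simps Suc.IH a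
    by (simp add: algebra_simps)
qed

lemma U_closed: "U (Suc m) c d = c * F (2*m+1) + d * F (2*m+2)"
proof (induction m arbitrary: c d)
  case 0 then show ?case by (simp add: numeral_2_eq_2)
next
  case (Suc m)
  have a: "2 * Suc m + 1 = Suc (Suc (2*m + 1))" "2 * Suc m + 2 = Suc (Suc (2*m + 2))" by simp_all
  have b: "2*m+2 = Suc (2*m+1)" by simp
  show ?case unfolding U.simps(2)[of "Suc m"] Suc.IH a F2 b
    by (simp add: algebra_simps)
qed

lemma stern_4q2: "stern (4*q+2) = stern q + stern (q+1)"
proof -
  have "4*q+2 = 2*(2*q+1)" by simp
  then show ?thesis using stern_even[of "2*q+1"] stern_odd[of q] by simp
qed

lemma stern_4q3: "stern (4*q+3) = stern q + 2 * stern (q+1)"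
proof -
  have "stern (4*q+3) = stern (2*(2*q+1)+1)" by (rule arg_cong[where f=stern]) simp
  also have "\<dots> = stern (2*q+1) + stern (2*q+1+1)" by (rule stern_odd)
  also have "stern (2*q+1+1) = stern (2*(q+1))" by (rule arg_cong[where f=stern]) simp
  also have "\<dots> = stern (q+1)" by (rule stern_even)
  finally show ?thesis using stern_odd[of q] by simp
qed

lemma stern_4q4: "stern (4*q+4) = stern (q+1)"
proof -
  have "stern (4*q+4) = stern (2*(2*(q+1)))" by (rule arg_cong[where f=stern]) simp
  also have "\<dots> = stern (2*(q+1))" by (rule stern_even)
  also have "\<dots> = stern (q+1)" by (rule stern_even)
  finally show ?thesis .
qed

lemma E_both: "stern (4^m*q + tt m) = U m (stern q) (stern (q+1)) \<and>
               stern (4^m*q + tt m + 1) = V m (stern q) (stern (q+1))"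
proof (induction m arbitrary: q)
  case 0 then show ?case by simp
next
  case (Suc m)
  have e: "4^(Suc m)*q + tt (Suc m) = 4^m*(4*q+2) + tt m" by (simp add: algebra_simps)
  have s1: "stern (4*q+2+1) = stern q + 2 * stern (q+1)" using stern_4q3[of q] by (simp add: numeral_3_eq_3)
  note ih = Suc.IH[of "4*q+2"]
  show ?case unfolding e U.simps V.simps using ih unfolding s1 stern_4q2[of q] by simp
qed

lemma ident4: "x \<le> 4^k \<Longrightarrow> stern (4^k*p + x) = stern p * stern (4^k - x) + stern (p+1) * stern x"
  using ident[of x "2*k" p] by (simp add: power_mult)

lemma sq: assumes h: "(c::nat)*c + c*d \<le> d*d" shows "8*c \<le> 5*d"
proof (rule ccontr)
  assume "\<not> ?thesis"
  then have lt: "5*d < 8*c" by simp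
  then have "(5*d)*(5*d) \<le> (5*d)*(8*c)" by (intro mult_le_mono2) simp
  then have "25*(d*d) \<le> 40*(c*d)" by (simp add: algebra_simps)
  with h have "25*(c*c) \<le> 15*(c*d)" by linarith
  then have "(5*c)*c \<le> (3*d)*c" by (simp add: algebra_simps)
  moreover have "c > 0" using lt by simp
  ultimately have "5*c \<le> 3*d" by simp
  with lt show False by linarith
qed

lemma sq2: assumes "(c::nat)*c + c*d \<le> d*d" shows "(c+d)*(c+d) + (c+d)*(c+2*d) \<le> (c+2*d)*(c+2*d)"
proof -
  have e1: "(c+d)*(c+d) + (c+d)*(c+2*d) = 2*(c*c) + 5*(c*d) + 3*(d*d)" by (simp add: algebra_simps)
  have e2: "(c+2*d)*(c+2*d) = c*c + 4*(c*d) + 4*(d*d)" by (simp add: algebra_simps)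
  show ?thesis unfolding e1 e2 using assms by simp
qed

lemma stern_3: "stern 3 = 2" using stern_4q3[of 0] by simp

lemma F_le2: "F (Suc (Suc n)) \<le> 2 * F (Suc n)" using F_mono[of n] by simp

lemma key_ineq:
  fixes c e X Y :: nat
  assumes "3*c \<le> 5*e" "X \<le> Y" "Y \<le> 2*X"
  shows "11*(c*(X+2*Y) + e*Y) \<le> 5*(c*X + (c+e)*Y) + 7*(c*Y + (c+e)*(X+Y))"
proof -
  have f1: "(3*c)*(Y+7*X) \<le> (5*e)*(Y+7*X)" using assms(1) by (rule mult_le_mono1)
  have f2: "c*Y \<le> c*(2*X)" using assms(3) by (rule mult_le_mono2)
  have L: "11*(c*(X+2*Y) + e*Y) = 11*(c*X) + 22*(c*Y) + 11*(e*Y)" by (simp add: algebra_simps)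
  have R: "5*(c*X + (c+e)*Y) + 7*(c*Y + (c+e)*(X+Y)) = 12*(c*X) + 19*(c*Y) + 12*(e*Y) + 7*(e*X)"
    by (simp add: algebra_simps)
  have f1': "3*(c*Y) + 21*(c*X) \<le> 5*(e*Y) + 35*(e*X)" using f1 by (simp add: algebra_simps)
  have f2': "c*Y \<le> 2*(c*X)" using f2 by (simp add: algebra_simps)
  show ?thesis unfolding L R using f1' f2' by linarith
qed

lemma B1: "c \<le> d \<Longrightarrow> c*c + c*d \<le> d*d \<Longrightarrow> y \<le> tt m \<Longrightarrow>
   11*(c*stern(4^m - y) + d*stern y) \<le> 5*U m c d + 7*V m c d"
proof (induction m arbitrary: c d y)
  case 0 then show ?case by simp
next
  case (Suc k)
  have p4: "(4::nat)^(Suc k) = 4*4^k" by simp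
  show ?case
  proof (cases "y \<le> 2*4^k")
    case True
    define X where "X = F (2*k+1)"
    define Y where "Y = F (2*k+2)"
    have XY: "X \<le> Y" "Y \<le> 2*X" unfolding X_def Y_def
      using F_mono[of "2*k+1"] F_le2[of "2*k"] by (simp_all add: numeral_2_eq_2)
    have "y \<le> 2^(2*k+1)" using True by (simp add: power_mult)
    then have hb: "stern y \<le> Y" using L1[of y "2*k+1"] unfolding Y_def by simp
    have yl: "y \<le> 4^(Suc k)" using True by simp
    have "stern (4^(Suc k)*1 + y) = stern (4^(Suc k) - y) + stern y"
      using ident4[OF yl, of 1] by simp
    moreover have "4^(Suc k)*1 + y \<le> 2^(2*k+3)" using True by (simp add: power_mult power_add)
    moreover have "F (2*k+3+1) = X + 2*Y" unfolding X_def Y_def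
      by (simp add: numeral_2_eq_2 numeral_3_eq_3)
    ultimately have ha: "stern (4^(Suc k) - y) + stern y \<le> X + 2*Y" using L1[of "4^(Suc k)*1 + y" "2*k+3"] by simp
    obtain e where e: "d = c + e" using Suc.prems(1) le_Suc_ex by blast
    have "8*c \<le> 5*d" using sq[OF Suc.prems(2)] .
    then have ce: "3*c \<le> 5*e" using e by simp
    have U1: "U (Suc k) c d = c*X + (c+e)*Y" unfolding U_closed X_def Y_def e by simp
    have V1: "V (Suc k) c d = c*Y + (c+e)*(X+Y)" unfolding V_closed X_def Y_def e
      by (simp add: numeral_2_eq_2 numeral_3_eq_3)
    have "c*stern(4^Suc k - y) + d*stern y = c*(stern(4^Suc k - y) + stern y) + e * stern y"
      using e by (simp add: algebra_simps)
    also have "\<dots> \<le> c*(X+2*Y) + e*Y"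
      using mult_le_mono2[OF ha, of c] mult_le_mono2[OF hb, of e] by (rule add_mono)
    finally have m: "c*stern(4^Suc k - y) + d*stern y \<le> c*(X+2*Y) + e*Y" .
    have "11*(c*stern(4^Suc k - y) + d*stern y) \<le> 11*(c*(X+2*Y) + e*Y)" using m by simp
    also have "\<dots> \<le> 5*(c*X + (c+e)*Y) + 7*(c*Y + (c+e)*(X+Y))" using key_ineq[OF ce XY] .
    finally have fin: "11*(c*stern(4^Suc k - y) + d*stern y) \<le> 5*(c*X + (c+e)*Y) + 7*(c*Y + (c+e)*(X+Y))" .
    show ?thesis unfolding U1 V1 by (rule fin)
  next
    case False
    define y' where "y' = y - 2*4^k"
    have yy: "y = 4^k*2 + y'" using False y'_def by simp
    have y't: "y' \<le> tt k" using Suc.prems(3) yy by simp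
    have y'l: "y' \<le> 4^k" using y't tt_less[of k] by simp
    have xl: "4^k - y' \<le> 4^k" by simp
    have "4^(Suc k) - y = 4^k*1 + (4^k - y')" using yy y'l by simp
    then have a1: "stern (4^(Suc k) - y) = stern y' + stern (4^k - y')"
      using ident4[OF xl, of 1] y'l by simp
    have a2: "stern y = stern (4^k - y') + 2*stern y'"
      unfolding yy using ident4[OF y'l, of 2] stern_3 by simp
    have ih: "11*((c+d)*stern(4^k - y') + (c+2*d)*stern y') \<le> 5*U k (c+d) (c+2*d) + 7*V k (c+d) (c+2*d)"
      using Suc.IH[of "c+d" "c+2*d" y'] sq2[OF Suc.prems(2)] y't by simp
    have "c*stern(4^Suc k - y) + d*stern y = (c+d)*stern(4^k - y') + (c+2*d)*stern y'"
      unfolding a1 a2 by (simp add: algebra_simps)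
    then show ?thesis using ih by simp
  qed
qed

lemma B2: "tt m < x \<Longrightarrow> x < 4^m \<Longrightarrow> stern(4^m*p + x + 1) \<le> stern(4^m*p + tt m + 1)"
proof (induction m arbitrary: p x)
  case 0 then show ?case by simp
next
  case (Suc k)
  show ?case
  proof (cases "x < 3*4^k")
    case True
    define x' where "x' = x - 2*4^k"
    have xx: "x = 2*4^k + x'" using Suc.prems(1) x'_def by simp
    have h1: "tt k < x'" "x' < 4^k" using Suc.prems(1) True xx by simp_all
    have e1: "4^(Suc k)*p + x + 1 = 4^k*(4*p+2) + x' + 1" unfolding xx by (simp add: algebra_simps)
    have e2: "4^(Suc k)*p + tt (Suc k) + 1 = 4^k*(4*p+2) + tt k + 1" by (simp add: algebra_simps)
    show ?thesis unfolding e1 e2 using Suc.IH[OF h1] .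
  next
    case False
    define x' where "x' = x - 3*4^k"
    have xx: "x = 3*4^k + x'" using False x'_def by simp
    have xl: "x' + 1 \<le> 4^k" using Suc.prems(2) xx by simp
    have e1: "4^(Suc k)*p + x + 1 = 4^k*(4*p+3) + (x'+1)" unfolding xx by (simp add: algebra_simps)
    have "stern (4*p+3+1) = stern (4*p+4)" by (rule arg_cong[where f=stern]) simp
    then have "stern (4*p+3+1) = stern (p+1)" using stern_4q4[of p] by simp
    then have l1: "stern(4^(Suc k)*p + x + 1) = stern (4*p+3) * stern (4^k - (x'+1)) + stern (p+1) * stern (x'+1)"
      unfolding e1 using ident4[OF xl, of "4*p+3"] by simp
    have DC: "stern (p+1) \<le> stern (4*p+3)" using stern_4q3[of p] by simp
    have xl2: "x'+1 \<le> 2^(2*k)" using xl by (simp add: power_mult)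
    have "stern (4*p+3) * stern (2^(2*k) - (x'+1)) + stern (p+1) * stern (x'+1)
          \<le> stern (4*p+3) * F (2*k+1) + stern (p+1) * F (2*k)" using QB[OF DC xl2] .
    then have l2: "stern(4^(Suc k)*p + x + 1) \<le> (stern p + 2*stern (p+1)) * F (2*k+1) + stern (p+1) * F (2*k)"
      unfolding l1 stern_4q3 by (simp add: power_mult)
    have r: "stern(4^(Suc k)*p + tt (Suc k) + 1) = stern p * F (2*k+2) + stern (p+1) * F (2*k+3)"
    proof -
      have "stern(4^(Suc k)*p + tt (Suc k) + 1) = V (Suc k) (stern p) (stern (p+1))"
        by (rule conjunct2[OF E_both])
      also have "\<dots> = stern p * F (2*Suc k) + stern (p+1) * F (2*Suc k+1)" by (rule V_closed)
      also have "2*Suc k = 2*k+2" by simp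
      also have "2*k+2+1 = 2*k+3" by simp
      finally show ?thesis .
    qed
    have F3: "F (2*k+3) = 2*F (2*k+1) + F (2*k)" "F (2*k+2) = F (2*k+1) + F(2*k)"
      by (simp_all add: numeral_2_eq_2 numeral_3_eq_3)
    have "(stern p + 2*stern (p+1)) * F (2*k+1) + stern (p+1) * F (2*k)
          \<le> stern p * F (2*k+2) + stern (p+1) * F (2*k+3)"
      unfolding F3 by (simp add: algebra_simps)
    then show ?thesis using l2 r by simp
  qed
qed

lemma pow_str_Suc: "pow_str x (Suc n) = x @ pow_str x n" by (simp add: pow_str_def)
lemma pow_str_len: "length (pow_str [True,False] n) = 2*n"
  by (induction n) (simp_all add: pow_str_def)

lemma val2_append: "val2 (xs @ ys) = val2 xs * 2^length ys + val2 ys"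
  by (induction xs) (simp_all add: power_add algebra_simps)

lemma val2_less: "val2 xs < 2^length xs"
  by (induction xs) auto

lemma val2_pow: "val2 (pow_str [True,False] n) = tt n"
proof (induction n)
  case 0 then show ?case by (simp add: pow_str_def)
next
  case (Suc n)
  show ?case unfolding pow_str_Suc val2_append pow_str_len Suc.IH
    by (simp add: power_mult)
qed

lemma bin_aux_step: "bin_aux n = (if n = 0 then [] else bin_aux (n div 2) @ [odd n])"
  by (rule bin_aux.simps)

lemma val2_pos: "val2 (True # ys) > 0" by simp

lemma bin_aux_val2: "bin_aux (val2 (True # ys)) = True # ys"
proof (induction ys rule: rev_induct)
  case Nil
  have "bin_aux 1 = [True]" using bin_aux_step[of 1] bin_aux_step[of 0] by simp
  then show ?case by simp
next
  case (snoc b ys)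
  define m where "m = val2 (True # ys)"
  have mp: "m > 0" unfolding m_def by simp
  have h1: "val2 (True # ys @ [b]) = 2*m + (if b then 1 else 0)"
    using val2_append[of "True # ys" "[b]"] unfolding m_def by simp
  have h2: "bin_aux (2*m + (if b then 1 else 0)) = bin_aux m @ [b]"
    using bin_aux_step[of "2*m + (if b then 1 else 0)"] mp by auto
  have h3: "bin_aux m = True # ys" using snoc.IH unfolding m_def .
  show ?case unfolding h1 h2 h3 by simp
qed

lemma val2_bin_aux: "val2 (bin_aux n) = n"
proof (induction n rule: less_induct)
  case (less n)
  show ?case
  proof (cases "n = 0")
    case True then show ?thesis using bin_aux_step[of 0] by simp
  next
    case False
    have "val2 (bin_aux n) = val2 (bin_aux (n div 2)) * 2 + (if odd n then 1 else 0)"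
      using bin_aux_step[of n] False val2_append[of "bin_aux (n div 2)" "[odd n]"] by simp
    also have "\<dots> = n" using less.IH[of "n div 2"] False by simp presburger
    finally show ?thesis .
  qed
qed

lemma bin_aux_hd: "0 < n \<Longrightarrow> \<exists>ys. bin_aux n = True # ys"
proof (induction n rule: less_induct)
  case (less n)
  show ?case
  proof (cases "n div 2 = 0")
    case True
    then have "n = 1" using less.prems by simp
    then show ?thesis using bin_aux_step[of 1] bin_aux_step[of 0] by simp
  next
    case False
    then obtain ys where "bin_aux (n div 2) = True # ys" using less.IH[of "n div 2"] less.prems by auto
    then show ?thesis using bin_aux_step[of n] less.prems by simp
  qed
qed

lemma len_lower: assumes "length (bin v) = 2*n+4" shows "8*4^n \<le> v"
proof -
  have "v \<noteq> 0"
  proof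
    assume "v = 0" with assms show False by (simp add: bin_def)
  qed
  then obtain ys where ys: "bin v = True # ys" using bin_aux_hd[of v] by (auto simp: bin_def)
  have "v = val2 (bin v)" using val2_bin_aux[of v] \<open>v \<noteq> 0\<close> by (simp add: bin_def)
  also have "\<dots> = 2^(2*n+3) + val2 ys" using ys assms by simp
  finally have "2^(2*n+3) \<le> v" by simp
  then show ?thesis by (simp add: power_add power_mult)
qed

lemma take_upper: assumes "length (bin v) = 2*n+4" "take 4 (bin v) = [True,False,False,False]"
  shows "v < 9*4^n"
proof -
  have "v \<noteq> 0"
  proof
    assume "v = 0" with assms show False by (simp add: bin_def)
  qed
  define zs where "zs = drop 4 (bin v)"
  have b: "bin v = [True,False,False,False] @ zs" unfolding zs_def using assms(2)
    by (metis append_take_drop_id)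
  have lz: "length zs = 2*n" unfolding zs_def using assms(1) by simp
  have "v = val2 (bin v)" using val2_bin_aux[of v] \<open>v \<noteq> 0\<close> by (simp add: bin_def)
  also have "\<dots> = 8 * 2^(2*n) + val2 zs" unfolding b val2_append lz by simp
  finally have "v = 8*4^n + val2 zs" by (simp add: power_mult)
  moreover have "val2 zs < 4^n" using val2_less[of zs] lz by (simp add: power_mult)
  ultimately show ?thesis by simp
qed

lemma F_pos: "0 < F (Suc n)"
  by (induction n rule: nat_less_induct) (case_tac n; auto simp: less_Suc_eq)

lemma F5: "F (m+5) = 3*F m + 5*F (m+1)" by (simp add: numeral_eq_Suc)

lemma FUV: "11 * F (2*n+4) = 5*U n 1 4 + 7*V n 1 4 \<and> F (2*n+4) < V n 1 4
           \<and> U n 1 2 + V n 1 2 = F (2*n+4)"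
proof (cases n)
  case 0 then show ?thesis by (simp add: numeral_eq_Suc)
next
  case (Suc k)
  define X where "X = F (2*k+1)"
  define Y where "Y = F (2*k+2)"
  have e: "2*n+4 = (2*k+1)+5" using Suc by simp
  have Fn: "F (2*n+4) = 3*X + 5*Y" unfolding e F5 X_def Y_def by simp
  have f3: "F (2*k+3) = X + Y" unfolding X_def Y_def by (simp add: numeral_2_eq_2 numeral_3_eq_3)
  have p: "0 < X" using F_pos[of "2*k"] unfolding X_def by simp
  have V': "\<And>c d. V n c d = c * Y + d * (X+Y)"
  proof -
    fix c d
    have "V n c d = c * F (2*Suc k) + d * F (2*Suc k + 1)" unfolding Suc by (rule V_closed)
    also have "2*Suc k = 2*k+2" by simp
    also have "2*k+2+1 = 2*k+3" by simp
    finally show "V n c d = c * Y + d * (X+Y)" unfolding f3 Y_def .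
  qed
  have U': "\<And>c d. U n c d = c * X + d * Y" unfolding Suc U_closed X_def Y_def by simp
  show ?thesis unfolding Fn U' V' using p by simp
qed

theorem mainTheorem15:
  fixes n :: nat
  defines "w \<equiv> val2 ([True, False, False, False] @ pow_str [True, False] n)"
  shows "{v \<in> R. length (bin v) = 2 * n + 4 \<and>
                 take 4 (bin v) = [True, False, False, False]} = {w}
         \<and> w \<in> R \<and> length (bin w) = 2 * n + 4
         \<and> (\<forall>v \<in> R. length (bin v) = 2 * n + 4 \<longrightarrow> w \<le> v)"
proof -
  have w_eq: "w = 8*4^n + tt n" unfolding w_def val2_append pow_str_len val2_pow
    by (simp add: power_mult)
  have tl: "tt n < 4^n" by (rule tt_less)
  have bw: "bin w = [True,False,False,False] @ pow_str [True,False] n"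
  proof -
    have "w \<noteq> 0" using w_eq by simp
    then have "bin w = bin_aux (val2 (True # ([False,False,False] @ pow_str [True,False] n)))"
      unfolding bin_def w_def by simp
    then show ?thesis unfolding bin_aux_val2 by simp
  qed
  have lw: "length (bin w) = 2*n+4" unfolding bw by (simp add: pow_str_len)
  have tw: "take 4 (bin w) = [True,False,False,False]" unfolding bw by simp
  have st9: "stern (8+1) = 4" using stern_9 by simp
  have sw: "stern (w+1) = V n 1 4"
    using conjunct2[OF E_both[of n 8]] unfolding w_eq stern_8 st9 by (simp add: mult.commute)
  note fuv = FUV[of n]
  have lowb: "\<And>x. x < 8*4^n \<Longrightarrow> stern (x+1) \<le> F (2*n+4)"
  proof -
    fix x :: nat assume "x < 8*4^n"
    then have "x+1 \<le> 2^(2*n+3)" by (simp add: power_add power_mult)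
    then have "stern (x+1) \<le> F (2*n+3+1)" by (rule L1)
    moreover have "2*n+3+1 = 2*n+4" by simp
    ultimately show "stern (x+1) \<le> F (2*n+4)" by (simp only:)
  qed
  have midb: "\<And>x. 8*4^n \<le> x \<Longrightarrow> x < w \<Longrightarrow> stern (x+1) \<le> F (2*n+4)"
  proof -
    fix x :: nat assume a: "8*4^n \<le> x" "x < w"
    define y where "y = x + 1 - 8*4^n"
    have yt: "y \<le> tt n" using a w_eq y_def by simp
    have yl: "y \<le> 4^n" using yt tl by simp
    have "x + 1 = 4^n*8 + y" using a y_def by simp
    then have "stern (x+1) = stern 8 * stern (4^n - y) + stern (8+1) * stern y"
      using ident4[OF yl, of 8] by simp
    then have "stern (x+1) = 1 * stern (4^n - y) + 4 * stern y" unfolding stern_8 st9 by simp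
    moreover have "11*(1 * stern (4^n - y) + 4 * stern y) \<le> 5*U n 1 4 + 7*V n 1 4"
      using B1[of 1 4 y n] yt by simp
    ultimately show "stern (x+1) \<le> F (2*n+4)" using fuv by simp
  qed
  have wR: "w \<in> R"
    unfolding R_def s_def
  proof (safe)
    fix i assume "i < w"
    show "stern (i+1) < stern (w+1)"
    proof (cases "i < 8*4^n")
      case True then show ?thesis using lowb[OF True] fuv sw by simp
    next
      case False then show ?thesis using midb[of i] \<open>i < w\<close> fuv sw by simp
    qed
  qed
  define i0 where "i0 = 2*(4^n*2 + tt n)"
  have i0l: "i0 < 8*4^n" unfolding i0_def using tl by simp
  have si0: "stern (i0+1) = F (2*n+4)"
  proof -
    have "stern (i0+1) = stern (4^n*2 + tt n) + stern (4^n*2 + tt n + 1)"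
      unfolding i0_def by (rule stern_odd)
    also have "\<dots> = U n 1 2 + V n 1 2"
      using E_both[of n 2] stern_3 by (simp add: numeral_3_eq_3)
    finally show ?thesis using fuv by simp
  qed
  have notR1: "\<And>v. 8*4^n \<le> v \<Longrightarrow> v < w \<Longrightarrow> v \<notin> R"
  proof
    fix v assume a: "8*4^n \<le> v" "v < w" "v \<in> R"
    have "i0 < v" using i0l a by simp
    then have "s i0 < s v" using a(3) unfolding R_def by simp
    then show False using si0 midb[OF a(1,2)] unfolding s_def by simp
  qed
  have notR2: "\<And>v. w < v \<Longrightarrow> v < 9*4^n \<Longrightarrow> v \<notin> R"
  proof
    fix v assume a: "w < v" "v < 9*4^n" "v \<in> R"
    define x where "x = v - 8*4^n"
    have xv: "v = 4^n*8 + x" using a w_eq x_def by simp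
    have "tt n < x" "x < 4^n" using a w_eq x_def by simp_all
    then have "stern (4^n*8 + x + 1) \<le> stern (4^n*8 + tt n + 1)" by (rule B2)
    then have "s v \<le> s w" unfolding s_def xv w_eq by (simp add: mult.commute)
    moreover have "s w < s v" using a(1,3) unfolding R_def by simp
    ultimately show False by simp
  qed
  have P1: "{v \<in> R. length (bin v) = 2 * n + 4 \<and>
                 take 4 (bin v) = [True, False, False, False]} = {w}"
  proof (safe)
    fix v assume v: "v \<in> R" "length (bin v) = 2*n+4" "take 4 (bin v) = [True, False, False, False]"
    have "8*4^n \<le> v" using len_lower[OF v(2)] .
    moreover have "v < 9*4^n" using take_upper[OF v(2,3)] .
    ultimately show "v = w" using notR1[of v] notR2[of v] v(1) by (cases "v < w"; cases "w < v") auto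
  qed (use wR lw tw in auto)
  have P2: "\<forall>v \<in> R. length (bin v) = 2 * n + 4 \<longrightarrow> w \<le> v"
  proof (intro ballI impI)
    fix v assume v: "v \<in> R" "length (bin v) = 2*n+4"
    have "8*4^n \<le> v" using len_lower[OF v(2)] .
    then show "w \<le> v" using notR1[of v] v(1) by (cases "v < w") auto
  qed
  show ?thesis using P1 P2 wR lw by simp
qed

end
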